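(* Let the sequences be generated by Algorithm iMBA and suppose Assumptions 2 and 3 hold. Then $\omega(x^0)$ is nonempty and compact, and $\lim_{k\to\infty}\|x^k-\overline x^k\|=0$ and $\lim_{k\to\infty}\|x^{k+1}-\overline x^k\|=0$.
   Context: Problem (P): $\min_{x\in\mathbb{R}^n}F(x):=g_0(x)+\delta_{\mathbb{R}^m_-}(g(x))+\phi(x)$, where $g=(g_1,\dots,g_m)^\top$ and $\delta_{\mathbb{R}^m_-}$ is the indicator of the nonpositive orthant. Assumption 1 (standing): (i) $g_0:\mathbb{R}^n\to(-\infty,\infty]$ is locally Lipschitz and upper-$\mathcal C^2$ at every point of an open convex set $\mathcal O\supset\Gamma:=\{x:g(x)\in\mathbb{R}^m_-\}\neq\emptyset$, and each $g_i:\mathbb{R}^n\to\mathbb{R}$, $i\in[m]$, is locally Lipschitz and upper-$\mathcal C^2$ at every point of $\mathbb{R}^n$; (ii) $\phi:\mathbb{R}^n\to\mathbb{R}$ is convex and $F$ is bounded below on $\Gamma$. $\partial$ denotes the limiting subdifferential; $\partial g(x):=\{V\in\mathbb{R}^{n\times m}: V_i\in\partial g_i(x)\ \forall i\}$. Define $G(x,s,V,L):=g(s)+V^\top(x-s)+\tfrac12\|x-s\|^2L$. Algorithm iMBA (parameters $0<\mu_{\min}\le\mu_{\max}$, $0<L_{\min}\le L_{\max}$, $M,\beta_C,\beta_S,\alpha>0$, $\tau>1$, $x^0\in\Gamma$): at iteration $k$ choose $\xi^k\in\partial g_0(x^k)$, $V^k\in\partial g(x^k)$, $\mu_{k,0}\in[\mu_{\min},\mu_{\max}]$,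 $L^{k,0}\in[L_{\min},L_{\max}]^m$; for $j=0,1,\dots$ choose self-adjoint $\mathcal Q_{k,j}$ with $\mu_{k,j}\mathcal I\preceq\mathcal Q_{k,j}\preceq(\mu_{k,j}+M)\mathcal I$, let $F_{k,j}(x):=g_0(x^k)+\langle\xi^k,x-x^k\rangle+\frac12\langle x-x^k,\mathcal Q_{k,j}(x-x^k)\rangle+\phi(x)$, $\Gamma_{k,j}:=\{x:G(x,x^k,V^k,L^{k,j})\in\mathbb{R}^m_-\}$, $\overline x^{k,j}$ the unique minimizer of $F_{k,j}$ on $\Gamma_{k,j}$, and compute $y^{k,j}$, $v^{k,j}\in\partial\phi(y^{k,j})$, $\lambda^{k,j}\in\mathbb{R}^m_+$ with $F_{k,j}(y^{k,j})\le F_{k,j}(x^k)$, $(-\langle\lambda^{k,j},G(y^{k,j},x^k,V^k,L^{k,j})\rangle)_++\|[G(y^{k,j},x^k,V^k,L^{k,j})]_+\|_\infty\le\frac{\beta_C}2\|y^{k,j}-x^k\|^2$ and $\|\xi^k+\mathcal Q_{k,j}(y^{k,j}-x^k)+v^{k,j}+V^k\lambda^{k,j}+\langle L^{k,j},\lambda^{k,j}\rangle(y^{k,j}-x^k)\|\le\beta_S\|y^{k,j}-x^k\|$. If $g(y^{k,j})\in\mathbb{R}^m_-$ and $F(y^{k,j})\le F(x^k)-\frac\alpha2\|y^{k,j}-x^k\|^2$, accept ($j_k:=j$); else if $g(y^{k,j})\notin\mathbb{R}^m_-$ set $L^{k,j+1}=\tau L^{k,j}$, $\mu_{k,j+1}=\mu_{k,j}$;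 else $L^{k,j+1}=L^{k,j}$, $\mu_{k,j+1}=\tau\mu_{k,j}$. Then $x^{k+1}:=y^{k,j_k}$, $(\mu_k,\mathcal Q_k,L^k,v^{k+1},\lambda^{k+1}):=(\mu_{k,j_k},\mathcal Q_{k,j_k},L^{k,j_k},v^{k,j_k},\lambda^{k,j_k})$, $\overline x^k:=\overline x^{k,j_k}$. Assumption 2: for each $k,j$, the multifunction $x\mapsto G(x,x^k,V^k,L^{k,j})-\mathbb{R}^m_-$ is metrically subregular at $(\overline x^{k,j},0)$. Assumption 3: $\{x^k\}$ is bounded; $\omega(x^0)$ denotes its set of cluster points. *)

theory Defs
  imports "HOL-Analysis.Analysis"
begin

definition nonpos_orth :: "(real^'m) set" where
  "nonpos_orth = {w. \<forall>i. w $ i \<le> 0}"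

definition frechet_subdiff :: "('a::euclidean_space \<Rightarrow> real) \<Rightarrow> 'a \<Rightarrow> 'a set" where
  "frechet_subdiff f x =
     {v. Liminf (at x) (\<lambda>z. ereal ((f z - f x - inner v (z - x)) / norm (z - x))) \<ge> 0}"

definition limiting_subdiff :: "('a::euclidean_space \<Rightarrow> real) \<Rightarrow> 'a \<Rightarrow> 'a set" where
  "limiting_subdiff f x =
     {v. \<exists>xs vs. xs \<longlonglongrightarrow> x \<and> (\<lambda>k. f (xs k)) \<longlonglongrightarrow> f x \<and>
                 (\<forall>k. vs k \<in> frechet_subdiff f (xs k)) \<and> vs \<longlonglongrightarrow> v}"

text \<open>Generalized Jacobian-type set: matrices (stored by columns V $ i) whose i-th column
  is a limiting subgradient of g_i.\<close>
definition jac_subdiff :: "('a::euclidean_space \<Rightarrow> real^'m) \<Rightarrow> 'a \<Rightarrow> ('a^'m) set" where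
  "jac_subdiff g x = {V. \<forall>i. V $ i \<in> limiting_subdiff (\<lambda>z. g z $ i) x}"

definition locally_lipschitz_at :: "('a::metric_space \<Rightarrow> real) \<Rightarrow> 'a \<Rightarrow> bool" where
  "locally_lipschitz_at f x \<longleftrightarrow> (\<exists>U C. open U \<and> x \<in> U \<and> C-lipschitz_on U f)"

text \<open>Upper-C^2 at x (Rockafellar--Wets Def. 10.29, with min instead of max): near x, f is
  the pointwise minimum over a compact parameter set T (in the parameter type 'c) of C^2
  functions whose values, gradients and Hessians depend jointly continuously on (t,z).\<close>
definition upper_C2_at :: "'c::topological_space itself \<Rightarrow> ('a::euclidean_space \<Rightarrow> real) \<Rightarrow> 'a \<Rightarrow> bool" where
  "upper_C2_at _ f x \<longleftrightarrow>
     (\<exists>(U::'a set) (T::'c set) (h::'c \<Rightarrow> 'a \<Rightarrow> real) (Dh::'c \<Rightarrow> 'a \<Rightarrow> 'a) (D2h::'c \<Rightarrow> 'a \<Rightarrow> 'a \<Rightarrow>\<^sub>L 'a).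
        open U \<and> x \<in> U \<and> compact T \<and> T \<noteq> {} \<and>
        (\<forall>t\<in>T. \<forall>z\<in>U. (h t has_derivative (\<lambda>u. inner (Dh t z) u)) (at z) \<and>
                        (Dh t has_derivative blinfun_apply (D2h t z)) (at z)) \<and>
        continuous_on (T \<times> U) (\<lambda>(t,z). h t z) \<and>
        continuous_on (T \<times> U) (\<lambda>(t,z). Dh t z) \<and>
        continuous_on (T \<times> U) (\<lambda>(t,z). D2h t z) \<and>
        (\<forall>z\<in>U. (\<exists>t\<in>T. f z = h t z) \<and> (\<forall>t\<in>T. f z \<le> h t z)))"

definition metric_subregular :: "('a::metric_space \<Rightarrow> 'b::metric_space set) \<Rightarrow> 'a \<Rightarrow> 'b \<Rightarrow> bool" where
  "metric_subregular S x y \<longleftrightarrow> y \<in> S x \<and>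
     (\<exists>\<kappa>>0. \<exists>\<epsilon>>0. \<forall>u\<in>ball x \<epsilon>. infdist u {w. y \<in> S w} \<le> \<kappa> * infdist y (S u))"

definition Gmap :: "('a::euclidean_space \<Rightarrow> real^'m) \<Rightarrow> 'a \<Rightarrow> 'a^'m \<Rightarrow> real^'m \<Rightarrow> 'a \<Rightarrow> real^'m" where
  "Gmap g s V L z = g s + (\<chi> i. inner (V $ i) (z - s)) + ((norm (z - s))\<^sup>2 / 2) *\<^sub>R L"

definition iMBA_F :: "('a \<Rightarrow> real) \<Rightarrow> ('a \<Rightarrow> real^'m) \<Rightarrow> ('a \<Rightarrow> real) \<Rightarrow> 'a \<Rightarrow> ereal" where
  "iMBA_F g0 g \<phi> z = (if g z \<in> nonpos_orth then ereal (g0 z + \<phi> z) else \<infinity>)"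

definition posinf_norm :: "real^'m \<Rightarrow> real" where
  "posinf_norm w = Max (range (\<lambda>i. max (w $ i) 0))"

definition cluster_points :: "(nat \<Rightarrow> 'a::topological_space) \<Rightarrow> 'a set" where
  "cluster_points s = {z. \<exists>r. strict_mono r \<and> (s \<circ> r) \<longlonglongrightarrow> z}"

end

theory Submission
  imports Defs
begin

lemma Gmap_nth: "Gmap g s V L z $ i = g s $ i + inner (V $ i) (z - s) + (norm (z - s))\<^sup>2 / 2 * L $ i"
  by (simp add: Gmap_def)

lemma inner_vec_sum: "inner (a::real^'m) b = (\<Sum>i\<in>UNIV. a $ i * b $ i)"
  by (simp add: inner_vec_def)

lemma norm_add_sq: "(norm (u + h))\<^sup>2 = (norm u)\<^sup>2 + 2 * inner u h + (norm h)\<^sup>2"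
  for u h :: "'a::real_inner"
  by (simp add: power2_norm_eq_inner inner_add inner_commute)

lemma quad_expand:
  fixes Q :: "'a::real_inner \<Rightarrow> 'a"
  assumes "linear Q" "\<forall>u w. inner (Q u) w = inner u (Q w)"
  shows "inner (u + h) (Q (u + h)) = inner u (Q u) + 2 * inner (Q u) h + inner h (Q h)"
proof -
  have "Q (u + h) = Q u + Q h" using assms(1) by (simp add: linear_add)
  moreover have "inner u (Q h) = inner (Q u) h" using assms(2) by simp
  ultimately show ?thesis by (simp add: inner_add inner_commute)
qed

lemma lagr_ineq:
  fixes a y z v \<xi> :: "'a::euclidean_space" and Q :: "'a \<Rightarrow> 'a" and g :: "'a \<Rightarrow> real^'m"
    and VV :: "'a^'m" and LL lam :: "real^'m" and \<phi> :: "'a \<Rightarrow> real"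
  assumes Qlin: "linear Q" and Qsym: "\<forall>u w. inner (Q u) w = inner u (Q w)"
    and Qpos: "\<forall>u. \<mu> * (norm u)\<^sup>2 \<le> inner u (Q u)"
    and Lnn: "\<forall>i. 0 \<le> LL $ i" and lam: "\<forall>i. lam $ i \<ge> 0"
    and sub: "\<phi> z \<ge> \<phi> y + inner v (z - y)"
  shows "c0 + inner \<xi> (z - a) + inner (z - a) (Q (z - a)) / 2 + \<phi> z + inner lam (Gmap g a VV LL z)
     \<ge> c0 + inner \<xi> (y - a) + inner (y - a) (Q (y - a)) / 2 + \<phi> y + inner lam (Gmap g a VV LL y)
       + inner (\<xi> + Q (y - a) + v + (\<Sum>i\<in>UNIV. lam $ i *\<^sub>R VV $ i) + inner LL lam *\<^sub>R (y - a)) (z - y)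
       + \<mu> / 2 * (norm (z - y))\<^sup>2"
proof -
  define u where "u = y - a"
  define h where "h = z - y"
  have za: "z - a = u + h" by (simp add: u_def h_def)
  have q: "inner (z - a) (Q (z - a)) = inner u (Q u) + 2 * inner (Q u) h + inner h (Q h)"
    unfolding za by (rule quad_expand[OF Qlin Qsym])
  have Gd: "Gmap g a VV LL z $ i - Gmap g a VV LL y $ i
      = inner (VV $ i) h + LL $ i * inner u h + LL $ i * (norm h)\<^sup>2 / 2" for i
    unfolding Gmap_nth za by (simp add: norm_add_sq inner_add algebra_simps inner_commute flip: u_def)
  have lg: "inner lam (Gmap g a VV LL z) - inner lam (Gmap g a VV LL y)
      = (\<Sum>i\<in>UNIV. lam $ i * inner (VV $ i) h) + inner LL lam * inner u h
        + (\<Sum>i\<in>UNIV. lam $ i * LL $ i) * (norm h)\<^sup>2 / 2"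
  proof -
    have "inner lam (Gmap g a VV LL z) - inner lam (Gmap g a VV LL y)
        = (\<Sum>i\<in>UNIV. lam $ i * (Gmap g a VV LL z $ i - Gmap g a VV LL y $ i))"
      by (simp add: inner_vec_sum sum_subtractf algebra_simps)
    also have "\<dots> = (\<Sum>i\<in>UNIV. lam $ i * inner (VV $ i) h + (LL $ i * lam $ i) * inner u h
                     + (lam $ i * LL $ i) * (norm h)\<^sup>2 / 2)"
      by (simp add: Gd algebra_simps)
    also have "\<dots> = (\<Sum>i\<in>UNIV. lam $ i * inner (VV $ i) h) + inner LL lam * inner u h
        + (\<Sum>i\<in>UNIV. lam $ i * LL $ i) * (norm h)\<^sup>2 / 2"
      by (simp add: sum.distrib inner_vec_sum sum_distrib_right sum_divide_distrib)
    finally show ?thesis .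
  qed
  have nn: "(\<Sum>i\<in>UNIV. lam $ i * LL $ i) \<ge> 0" using lam Lnn by (intro sum_nonneg) auto
  have wh: "inner (\<xi> + Q (y - a) + v + (\<Sum>i\<in>UNIV. lam $ i *\<^sub>R VV $ i) + inner LL lam *\<^sub>R (y - a)) (z - y)
      = inner \<xi> h + inner (Q u) h + inner v h + (\<Sum>i\<in>UNIV. lam $ i * inner (VV $ i) h)
        + inner LL lam * inner u h"
    by (simp add: inner_add_left inner_sum_left u_def h_def)
  have qh: "\<mu> * (norm h)\<^sup>2 \<le> inner h (Q h)" using Qpos by blast
  have "inner \<xi> (z - a) = inner \<xi> u + inner \<xi> h" by (simp add: za inner_add)
  moreover have "\<phi> z \<ge> \<phi> y + inner v h" using sub by (simp add: h_def)
  moreover have "0 \<le> (\<Sum>i\<in>UNIV. lam $ i * LL $ i) * (norm h)\<^sup>2 / 2" using nn by simp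
  moreover have "\<mu> / 2 * (norm h)\<^sup>2 = (\<mu> * (norm h)\<^sup>2) / 2" by simp
  ultimately show ?thesis
    using lg wh q qh unfolding u_def[symmetric] h_def[symmetric] by linarith
qed

lemma posinf_norm_ge: "w $ i \<le> posinf_norm (w::real^'m)"
proof -
  have "max (w $ i) 0 \<le> posinf_norm w"
    unfolding posinf_norm_def by (rule Max_ge) auto
  then show ?thesis by simp
qed

lemma posinf_norm_nonneg: "0 \<le> posinf_norm (w::real^'m)"
proof -
  have "max (w $ undefined) 0 \<le> posinf_norm w"
    unfolding posinf_norm_def by (rule Max_ge) auto
  then show ?thesis by simp
qed

lemma norm_seg_sq:
  fixes A B :: "'a::real_inner"
  shows "(norm ((1 - t) *\<^sub>R A + t *\<^sub>R B))\<^sup>2 = (1 - t) * (norm A)\<^sup>2 + t * (norm B)\<^sup>2 - t * (1 - t) * (norm (B - A))\<^sup>2"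
  unfolding power2_norm_eq_inner by (simp add: inner_add inner_diff inner_commute algebra_simps)

lemma quad_seg:
  fixes Q :: "'a::real_inner \<Rightarrow> 'a"
  assumes "linear Q" "\<forall>u w. inner (Q u) w = inner u (Q w)" "\<forall>u. 0 \<le> inner u (Q u)"
    and t: "0 \<le> t" "t \<le> 1"
  shows "inner ((1 - t) *\<^sub>R A + t *\<^sub>R B) (Q ((1 - t) *\<^sub>R A + t *\<^sub>R B))
      \<le> (1 - t) * inner A (Q A) + t * inner B (Q B)"
proof -
  have e1: "(1 - t) *\<^sub>R A + t *\<^sub>R B = A + t *\<^sub>R (B - A)" by (simp add: algebra_simps)
  have e2: "B = A + (B - A)" by simp
  have qa: "inner (A + t *\<^sub>R (B - A)) (Q (A + t *\<^sub>R (B - A)))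
      = inner A (Q A) + 2 * t * inner (Q A) (B - A) + t\<^sup>2 * inner (B - A) (Q (B - A))"
    using quad_expand[OF assms(1,2), of A "t *\<^sub>R (B - A)"] assms(1)
    by (simp add: linear_scale power2_eq_square)
  have qb: "inner B (Q B) = inner A (Q A) + 2 * inner (Q A) (B - A) + inner (B - A) (Q (B - A))"
    using quad_expand[OF assms(1,2), of A "B - A"] by simp
  have "0 \<le> (t - t\<^sup>2) * inner (B - A) (Q (B - A))"
    using assms(3) t by (intro mult_nonneg_nonneg) (auto simp: power2_eq_square mult_left_le)
  then show ?thesis unfolding e1 qa qb by (simp add: algebra_simps power2_eq_square)
qed

lemma quad_bound:
  fixes m r d bC bS :: real
  assumes "0 < m" "0 \<le> r" "0 \<le> d" "0 \<le> bC" "0 \<le> bS"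
    and h: "m * r\<^sup>2 \<le> bC * d\<^sup>2 + 2 * bS * d * r"
  shows "r\<^sup>2 \<le> max (16 * bS\<^sup>2 / m\<^sup>2) (2 * bC / m) * d\<^sup>2"
proof (cases "2 * bS * d * r \<le> m * r\<^sup>2 / 2")
  case True
  then have "m * r\<^sup>2 \<le> 2 * bC * d\<^sup>2" using h by linarith
  then have "r\<^sup>2 \<le> 2 * bC / m * d\<^sup>2" using assms(1) by (simp add: field_simps)
  moreover have "2 * bC / m * d\<^sup>2 \<le> max (16 * bS\<^sup>2 / m\<^sup>2) (2 * bC / m) * d\<^sup>2"
    by (intro mult_right_mono) auto
  ultimately show ?thesis by linarith
next
  case False
  then have r0: "r > 0" using assms by (cases "r = 0") auto
  have "m * r * r < 4 * bS * d * r" using False by (simp add: power2_eq_square algebra_simps)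
  then have "m * r < 4 * bS * d" using r0 by simp
  then have lt: "r < 4 * bS * d / m" using assms(1) by (simp add: field_simps)
  have "r\<^sup>2 \<le> (4 * bS * d / m)\<^sup>2" using lt r0 by (intro power_mono) auto
  also have "\<dots> = 16 * bS\<^sup>2 / m\<^sup>2 * d\<^sup>2" by (simp add: power_divide power_mult_distrib)
  also have "\<dots> \<le> max (16 * bS\<^sup>2 / m\<^sup>2) (2 * bC / m) * d\<^sup>2"
    by (intro mult_right_mono) auto
  finally show ?thesis .
qed

lemma key_bound:
  fixes a y xb v \<xi> :: "'a::euclidean_space" and Q :: "'a \<Rightarrow> 'a" and g :: "'a \<Rightarrow> real^'m"
    and VV :: "'a^'m" and LL lam :: "real^'m" and \<phi> :: "'a \<Rightarrow> real"
    and c0 :: real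
    and Fk :: "'a \<Rightarrow> real" and G :: "'a \<Rightarrow> real^'m"
  assumes Fk_def: "\<And>z. Fk z = c0 + inner \<xi> (z - a) + inner (z - a) (Q (z - a)) / 2 + \<phi> z"
    and G_def: "G = Gmap g a VV LL"
    and cvx: "convex_on UNIV \<phi>"
    and Qlin: "linear Q" and Qsym: "\<forall>u w. inner (Q u) w = inner u (Q w)"
    and Qpos: "\<forall>u. \<mu> * (norm u)\<^sup>2 \<le> inner u (Q u)"
    and mu: "\<mu>min \<le> \<mu>" "0 < \<mu>min" and Lb: "\<forall>i. Lmin \<le> LL $ i" "0 < Lmin"
    and bC: "0 < \<beta>C" and bS: "0 < \<beta>S"
    and xbf: "G xb \<in> nonpos_orth" and xbopt: "\<forall>z. G z \<in> nonpos_orth \<longrightarrow> Fk xb \<le> Fk z"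
    and sub: "\<forall>z. \<phi> z \<ge> \<phi> y + inner v (z - y)"
    and lam: "\<forall>i. lam $ i \<ge> 0"
    and comp: "max (- inner lam (G y)) 0 + posinf_norm (G y) \<le> \<beta>C / 2 * (norm (y - a))\<^sup>2"
    and res: "norm (\<xi> + Q (y - a) + v + (\<Sum>i\<in>UNIV. lam $ i *\<^sub>R VV $ i) + inner LL lam *\<^sub>R (y - a))
              \<le> \<beta>S * norm (y - a)"
  shows "(norm (y - xb))\<^sup>2 \<le> max (\<beta>C / Lmin) (max (16 * \<beta>S\<^sup>2 / \<mu>min\<^sup>2) (2 * \<beta>C / \<mu>min)) * (norm (y - a))\<^sup>2"
proof -
  define d where "d = norm (y - a)"
  define r where "r = norm (y - xb)"
  define \<epsilon> where "\<epsilon> = \<beta>C / 2 * d\<^sup>2"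
  define w where "w = \<xi> + Q (y - a) + v + (\<Sum>i\<in>UNIV. lam $ i *\<^sub>R VV $ i) + inner LL lam *\<^sub>R (y - a)"
  define K where "K = max (\<beta>C / Lmin) (max (16 * \<beta>S\<^sup>2 / \<mu>min\<^sup>2) (2 * \<beta>C / \<mu>min))"
  have d0: "0 \<le> d" and r0: "0 \<le> r" by (simp_all add: d_def r_def)
  have mu0: "0 < \<mu>" using mu by linarith
  have Lnn: "\<forall>i. 0 \<le> LL $ i" using Lb by (meson less_le_trans less_imp_le)
  have pos_le: "posinf_norm (G y) \<le> \<epsilon>" and neg_le: "- inner lam (G y) \<le> \<epsilon>"
    using comp posinf_norm_nonneg[of "G y"] by (auto simp: \<epsilon>_def d_def)
  have Gy_le: "G y $ i \<le> \<epsilon>" for i using posinf_norm_ge[of "G y" i] pos_le by linarith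
  have Gxb: "G xb $ i \<le> 0" for i using xbf by (simp add: nonpos_orth_def)
  have lamGxb: "inner lam (G xb) \<le> 0"
    unfolding inner_vec_sum using lam Gxb by (intro sum_nonpos) (simp add: mult_nonneg_nonpos)
  have L: "Fk xb + inner lam (G xb) \<ge> Fk y + inner lam (G y) + inner w (xb - y) + \<mu> / 2 * (norm (xb - y))\<^sup>2"
    unfolding Fk_def G_def w_def
    by (rule lagr_ineq[OF Qlin Qsym Qpos Lnn lam]) (use sub in blast)
  have "inner w (xb - y) \<ge> - (\<beta>S * d * r)"
  proof -
    have "\<bar>inner w (xb - y)\<bar> \<le> norm w * norm (xb - y)" by (rule Cauchy_Schwarz_ineq2)
    also have "\<dots> \<le> \<beta>S * d * r"
      using res by (simp add: w_def d_def r_def norm_minus_commute mult_right_mono)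
    finally show ?thesis by linarith
  qed
  then have A: "Fk xb \<ge> Fk y - \<epsilon> - \<beta>S * d * r + \<mu> / 2 * r\<^sup>2"
    using L lamGxb neg_le by (simp add: r_def norm_minus_commute)
  show ?thesis
  proof (cases "r\<^sup>2 \<le> \<beta>C / Lmin * d\<^sup>2")
    case True
    have "\<beta>C / Lmin * d\<^sup>2 \<le> K * d\<^sup>2" unfolding K_def by (intro mult_right_mono) auto
    then show ?thesis using True by (simp add: K_def r_def d_def)
  next
    case False
    define t where "t = \<beta>C * d\<^sup>2 / (Lmin * r\<^sup>2)"
    have rpos: "r\<^sup>2 > 0" using False bC Lb by (smt (verit) d0 divide_nonneg_pos zero_le_power2 mult_nonneg_nonneg)
    have t0: "0 \<le> t" using bC Lb rpos by (simp add: t_def)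
    have t1: "t < 1" using False rpos Lb by (simp add: t_def field_simps)
    have tr: "Lmin * t * r\<^sup>2 = \<beta>C * d\<^sup>2" using rpos Lb by (simp add: t_def)
    define p where "p = (1 - t) *\<^sub>R y + t *\<^sub>R xb"
    have Gp: "G p $ i = (1 - t) * G y $ i + t * G xb $ i - LL $ i / 2 * (t * (1 - t) * r\<^sup>2)" for i
    proof -
      have pa: "p - a = (1 - t) *\<^sub>R (y - a) + t *\<^sub>R (xb - a)" by (simp add: p_def algebra_simps)
      have nsq: "(norm (p - a))\<^sup>2 = (1 - t) * (norm (y - a))\<^sup>2 + t * (norm (xb - a))\<^sup>2 - t * (1 - t) * r\<^sup>2"
        unfolding pa norm_seg_sq by (simp add: r_def norm_minus_commute)
      show ?thesis unfolding G_def Gmap_nth nsq unfolding pa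
        by (simp add: inner_add_right) (simp add: field_simps)
    qed
    have pf: "G p \<in> nonpos_orth"
    proof -
      have "G p $ i \<le> 0" for i
      proof -
        have "LL $ i / 2 * (t * (1 - t) * r\<^sup>2) \<ge> Lmin / 2 * (t * (1 - t) * r\<^sup>2)"
          using Lb t0 t1 by (intro mult_right_mono) auto
        moreover have "(1 - t) * G y $ i \<le> (1 - t) * \<epsilon>" using Gy_le t1 by (intro mult_left_mono) auto
        moreover have "t * G xb $ i \<le> 0" using Gxb t0 by (simp add: mult_nonneg_nonpos)
        moreover have "Lmin / 2 * (t * (1 - t) * r\<^sup>2) = (1 - t) * \<epsilon>"
          using tr unfolding \<epsilon>_def by (simp add: algebra_simps)
        ultimately show ?thesis unfolding Gp by linarith
      qed
      then show ?thesis by (simp add: nonpos_orth_def)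
    qed
    have "Fk xb \<le> Fk p" using xbopt pf by blast
    also have "Fk p \<le> (1 - t) * Fk y + t * Fk xb"
    proof -
      have pa: "p - a = (1 - t) *\<^sub>R (y - a) + t *\<^sub>R (xb - a)" by (simp add: p_def algebra_simps)
      have Qnn: "\<forall>u. 0 \<le> inner u (Q u)" using Qpos mu0
        by (meson mult_nonneg_nonneg less_imp_le zero_le_power2 order_trans)
      have q: "inner (p - a) (Q (p - a)) \<le> (1 - t) * inner (y - a) (Q (y - a)) + t * inner (xb - a) (Q (xb - a))"
        unfolding pa using quad_seg[OF Qlin Qsym Qnn t0] t1 by simp
      have ph: "\<phi> p \<le> (1 - t) * \<phi> y + t * \<phi> xb"
        unfolding p_def using convex_onD[OF cvx, of t y xb] t0 t1 by simp
      have li: "inner \<xi> (p - a) = (1 - t) * inner \<xi> (y - a) + t * inner \<xi> (xb - a)"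
        unfolding pa by (simp add: inner_add_right)
      have e: "(1 - t) * Fk y + t * Fk xb = c0 + ((1 - t) * inner \<xi> (y - a) + t * inner \<xi> (xb - a))
          + ((1 - t) * inner (y - a) (Q (y - a)) + t * inner (xb - a) (Q (xb - a))) / 2
          + ((1 - t) * \<phi> y + t * \<phi> xb)"
        unfolding Fk_def by (simp add: field_simps)
      have fp: "Fk p = c0 + inner \<xi> (p - a) + inner (p - a) (Q (p - a)) / 2 + \<phi> p" by (simp add: Fk_def)
      have aux: "\<And>Fp c l q f Q' F' L'::real. Fp = c + l + q / 2 + f \<Longrightarrow> q \<le> Q' \<Longrightarrow> f \<le> F' \<Longrightarrow> l = L'
          \<Longrightarrow> Fp \<le> c + L' + Q' / 2 + F'" by linarith
      from aux[OF fp q ph li] show ?thesis unfolding e .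
    qed
    finally have "(1 - t) * Fk xb \<le> (1 - t) * Fk y" by (simp add: algebra_simps)
    then have "Fk xb \<le> Fk y" using t1 by simp
    with A have "\<mu> / 2 * r\<^sup>2 \<le> \<epsilon> + \<beta>S * d * r" by linarith
    then have "\<mu> * r\<^sup>2 \<le> \<beta>C * d\<^sup>2 + 2 * \<beta>S * d * r" by (simp add: \<epsilon>_def algebra_simps)
    moreover have "\<mu>min * r\<^sup>2 \<le> \<mu> * r\<^sup>2" using mu by (intro mult_right_mono) auto
    ultimately have "\<mu>min * r\<^sup>2 \<le> \<beta>C * d\<^sup>2 + 2 * \<beta>S * d * r" by linarith
    then have "r\<^sup>2 \<le> max (16 * \<beta>S\<^sup>2 / \<mu>min\<^sup>2) (2 * \<beta>C / \<mu>min) * d\<^sup>2"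
      by (intro quad_bound) (use mu bC bS d0 r0 in auto)
    also have "\<dots> \<le> K * d\<^sup>2" unfolding K_def by (intro mult_right_mono) auto
    finally show ?thesis by (simp add: K_def r_def d_def)
  qed
qed
lemma frechet_convex_subgrad:
  fixes \<phi> :: "'a::euclidean_space \<Rightarrow> real"
  assumes cvx: "convex_on UNIV \<phi>" and v: "v \<in> frechet_subdiff \<phi> y"
  shows "\<phi> z \<ge> \<phi> y + inner v (z - y)"
proof (rule ccontr)
  assume neg: "\<not> \<phi> z \<ge> \<phi> y + inner v (z - y)"
  define c where "c = \<phi> y + inner v (z - y) - \<phi> z"
  have c: "c > 0" using neg by (simp add: c_def)
  have zy: "z \<noteq> y" using c by (auto simp: c_def)
  define D where "D = norm (z - y)"
  have D: "D > 0" using zy by (simp add: D_def)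
  have "ereal (- c / D) < 0" using c D by (simp add: divide_neg_pos)
  moreover have "0 \<le> Liminf (at y) (\<lambda>w. ereal ((\<phi> w - \<phi> y - inner v (w - y)) / norm (w - y)))"
    using v by (simp add: frechet_subdiff_def)
  ultimately have ev: "eventually (\<lambda>w. ereal (- c / D) < ereal ((\<phi> w - \<phi> y - inner v (w - y)) / norm (w - y))) (at y)"
    by (subst (asm) le_Liminf_iff) (simp only:)
  then have "\<exists>d>0. \<forall>w. w \<noteq> y \<and> dist w y < d \<longrightarrow>
      - c / D < (\<phi> w - \<phi> y - inner v (w - y)) / norm (w - y)"
    unfolding eventually_at ereal_less_eq(3) by simp
  then obtain d where d: "d > 0" and dw: "\<And>w. w \<noteq> y \<Longrightarrow> dist w y < d \<Longrightarrow>
      - c / D < (\<phi> w - \<phi> y - inner v (w - y)) / norm (w - y)"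
    by blast
  define s where "s = min (1/2) (d / (2 * D))"
  have s: "s > 0" "s \<le> 1" using d D by (auto simp: s_def)
  define w where "w = (1 - s) *\<^sub>R y + s *\<^sub>R z"
  have wy: "w - y = s *\<^sub>R (z - y)" by (simp add: w_def algebra_simps)
  have nw: "norm (w - y) = s * D" using s by (simp add: wy D_def)
  have "w \<noteq> y" using nw s D by auto
  moreover have "dist w y < d"
  proof -
    have "s * D \<le> d / (2 * D) * D" using D by (intro mult_right_mono) (auto simp: s_def)
    also have "\<dots> = d / 2" using D by simp
    finally show ?thesis using d by (simp add: dist_norm nw)
  qed
  ultimately have lt: "- c / D < (\<phi> w - \<phi> y - inner v (w - y)) / norm (w - y)" by (rule dw)
  have "\<phi> w \<le> (1 - s) * \<phi> y + s * \<phi> z"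
    using convex_onD[OF cvx, of s y z] s by (simp add: w_def)
  moreover have "inner v (w - y) = s * inner v (z - y)" by (simp add: wy)
  ultimately have "\<phi> w - \<phi> y - inner v (w - y) \<le> s * (- c)"
    unfolding c_def by (simp add: algebra_simps)
  then have "(\<phi> w - \<phi> y - inner v (w - y)) / norm (w - y) \<le> s * (- c) / (s * D)"
    unfolding nw using s D by (intro divide_right_mono) auto
  also have "\<dots> = - c / D" using s by simp
  finally show False using lt by simp
qed

lemma limiting_convex_subgrad:
  fixes \<phi> :: "'a::euclidean_space \<Rightarrow> real"
  assumes cvx: "convex_on UNIV \<phi>" and v: "v \<in> limiting_subdiff \<phi> y"
  shows "\<phi> z \<ge> \<phi> y + inner v (z - y)"
proof -
  obtain xs vs where h: "xs \<longlonglongrightarrow> y" "(\<lambda>k. \<phi> (xs k)) \<longlonglongrightarrow> \<phi> y"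
      "\<forall>k. vs k \<in> frechet_subdiff \<phi> (xs k)" "vs \<longlonglongrightarrow> v"
    using v by (auto simp: limiting_subdiff_def)
  have "(\<lambda>k. \<phi> (xs k) + inner (vs k) (z - xs k)) \<longlonglongrightarrow> \<phi> y + inner v (z - y)"
    by (intro tendsto_intros h)
  moreover have "\<forall>k. \<phi> (xs k) + inner (vs k) (z - xs k) \<le> \<phi> z"
    using frechet_convex_subgrad[OF cvx] h(3) by blast
  ultimately show ?thesis by (intro LIMSEQ_le_const2) auto
qed
lemma subseq_from_frequent:
  fixes x :: "nat \<Rightarrow> 'a::metric_space"
  assumes freq: "\<forall>e>0. \<forall>N. \<exists>n\<ge>N. dist (x n) z < e"
  shows "\<exists>r. strict_mono r \<and> (x \<circ> r) \<longlonglongrightarrow> z"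
proof -
  have "\<forall>N. \<forall>e. \<exists>n. e > 0 \<longrightarrow> n \<ge> N \<and> dist (x n) z < e" using freq by blast
  then obtain f where f: "\<And>N e. e > 0 \<Longrightarrow> f N e \<ge> N \<and> dist (x (f N e)) z < e"
    by metis
  define r where "r = rec_nat (f 0 1) (\<lambda>k rk. f (Suc rk) (1 / (real (Suc k) + 1)))"
  have r0: "r 0 = f 0 1" and rS: "\<And>k. r (Suc k) = f (Suc (r k)) (1 / (real (Suc k) + 1))"
    by (simp_all add: r_def)
  have dist_r: "dist (x (r k)) z < 1 / (real k + 1)" for k
    by (cases k) (use f in \<open>auto simp: r0 rS\<close>)
  have "strict_mono r"
  proof (rule strict_monoI_Suc)
    fix k show "r k < r (Suc k)" using f[of "1 / (real (Suc k) + 1)" "Suc (r k)"] rS[of k] by simp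
  qed
  moreover have "(x \<circ> r) \<longlonglongrightarrow> z"
  proof (rule metric_LIMSEQ_I)
    fix e :: real assume e: "e > 0"
    obtain N :: nat where N: "1 / e < real N" using reals_Archimedean2 by blast
    have "\<forall>n\<ge>N. dist ((x \<circ> r) n) z < e"
    proof (intro allI impI)
      fix n assume "n \<ge> N"
      have "1 / (real n + 1) < e"
      proof -
        have "1 / e < real n + 1" using N \<open>n \<ge> N\<close> by linarith
        then have "1 < (real n + 1) * e" using e by (simp add: divide_less_eq)
        then show ?thesis by (simp add: divide_less_eq mult.commute)
      qed
      then show "dist ((x \<circ> r) n) z < e" using dist_r[of n] by simp
    qed
    then show "\<exists>no. \<forall>n\<ge>no. dist ((x \<circ> r) n) z < e" by blast
  qed
  ultimately show ?thesis by blast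
qed

lemma cluster_points_char:
  fixes x :: "nat \<Rightarrow> 'a::metric_space"
  shows "cluster_points x = {z. \<forall>e>0. \<forall>N. \<exists>n\<ge>N. dist (x n) z < e}"
proof safe
  fix z assume "z \<in> cluster_points x"
  then obtain r where r: "strict_mono r" "(x \<circ> r) \<longlonglongrightarrow> z" by (auto simp: cluster_points_def)
  fix e :: real and N :: nat assume e: "e > 0"
  obtain M where M: "\<forall>n\<ge>M. dist ((x \<circ> r) n) z < e"
    using r(2) e by (auto simp: lim_sequentially)
  have "r (max M N) \<ge> N" using seq_suble[OF r(1), of "max M N"] by simp
  then show "\<exists>n\<ge>N. dist (x n) z < e" using M by (intro exI[of _ "r (max M N)"]) auto
next
  fix z assume "\<forall>e>0. \<forall>N. \<exists>n\<ge>N. dist (x n) z < e"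
  then show "z \<in> cluster_points x" using subseq_from_frequent[of x z] by (auto simp: cluster_points_def)
qed

lemma cluster_points_props:
  fixes x :: "nat \<Rightarrow> 'a::heine_borel"
  assumes "bounded (range x)"
  shows "cluster_points x \<noteq> {} \<and> compact (cluster_points x)"
proof -
  obtain l r where "strict_mono r" "(x \<circ> r) \<longlonglongrightarrow> l"
    using bounded_imp_convergent_subsequence[OF assms] by blast
  then have ne: "cluster_points x \<noteq> {}" by (auto simp: cluster_points_def)
  have cl: "closed (cluster_points x)"
    unfolding cluster_points_char closure_subset_eq[symmetric]
  proof
    fix z assume "z \<in> closure {z. \<forall>e>0. \<forall>N. \<exists>n\<ge>N. dist (x n) z < e}"
    then have zc: "\<forall>e>0. \<exists>c\<in>{z. \<forall>e>0. \<forall>N. \<exists>n\<ge>N. dist (x n) z < e}. dist c z < e"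
      by (simp add: closure_approachable)
    show "z \<in> {z. \<forall>e>0. \<forall>N. \<exists>n\<ge>N. dist (x n) z < e}"
    proof (safe)
      fix e :: real and N :: nat assume e: "e > 0"
      obtain c where c: "\<forall>e>0. \<forall>N. \<exists>n\<ge>N. dist (x n) c < e" "dist c z < e/2"
        using zc[rule_format, of "e/2"] e by auto
      obtain n where n: "n \<ge> N" "dist (x n) c < e/2" using c(1)[rule_format, of "e/2" N] e by auto
      have "dist (x n) z < e" using dist_triangle_half_l[of "x n" c e z] n(2) c(2) by (simp add: dist_commute)
      then show "\<exists>n\<ge>N. dist (x n) z < e" using n by blast
    qed
  qed
  have bd: "bounded (cluster_points x)"
  proof -
    have "cluster_points x \<subseteq> closure (range x)"
    proof
      fix z assume "z \<in> cluster_points x"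
      then have h: "\<forall>e>0. \<forall>N. \<exists>n\<ge>N. dist (x n) z < e" by (simp add: cluster_points_char)
      show "z \<in> closure (range x)" unfolding closure_approachable
      proof (intro allI impI)
        fix e :: real assume "e > 0"
        then obtain n where "dist (x n) z < e" using h by blast
        then show "\<exists>y\<in>range x. dist y z < e" by blast
      qed
    qed
    then show ?thesis using assms bounded_closure bounded_subset by blast
  qed
  show ?thesis using ne cl bd compact_eq_bounded_closed by blast
qed

theorem lemma4p2:
  fixes g0 :: "'a::euclidean_space \<Rightarrow> real" and g :: "'a \<Rightarrow> real^'m" and \<phi> :: "'a \<Rightarrow> real"
    and Oset :: "'a set"
    and \<mu>min \<mu>max Lmin Lmax M \<beta>C \<beta>S \<alpha> \<tau> :: real
    and x :: "nat \<Rightarrow> 'a" and \<xi> :: "nat \<Rightarrow> 'a" and V :: "nat \<Rightarrow> 'a^'m"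
    and \<mu> :: "nat \<Rightarrow> nat \<Rightarrow> real" and L :: "nat \<Rightarrow> nat \<Rightarrow> real^'m"
    and Q :: "nat \<Rightarrow> nat \<Rightarrow> 'a \<Rightarrow> 'a"
    and y v :: "nat \<Rightarrow> nat \<Rightarrow> 'a" and lam :: "nat \<Rightarrow> nat \<Rightarrow> real^'m"
    and xbar :: "nat \<Rightarrow> nat \<Rightarrow> 'a" and jk :: "nat \<Rightarrow> nat"
  defines "\<Gamma> \<equiv> {z. g z \<in> nonpos_orth}"
    and "F \<equiv> iMBA_F g0 g \<phi>"
    and "Fkj \<equiv> \<lambda>k j z. g0 (x k) + inner (\<xi> k) (z - x k) + inner (z - x k) (Q k j (z - x k)) / 2 + \<phi> z"
    and "Gkj \<equiv> \<lambda>k j. Gmap g (x k) (V k) (L k j)"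
  assumes
    \<comment> \<open>Assumption 1\<close>
    O_open: "open Oset" and O_convex: "convex Oset" and Gamma_sub: "\<Gamma> \<subseteq> Oset" and Gamma_ne: "\<Gamma> \<noteq> {}"
    and g0_reg: "\<forall>z\<in>Oset. locally_lipschitz_at g0 z \<and> upper_C2_at TYPE('c::topological_space) g0 z"
    and g_reg: "\<forall>i z. locally_lipschitz_at (\<lambda>w. g w $ i) z \<and> upper_C2_at TYPE('c) (\<lambda>w. g w $ i) z"
    and phi_convex: "convex_on UNIV \<phi>"
    and F_bdd: "\<exists>c. \<forall>z\<in>\<Gamma>. F z \<ge> ereal c"
    \<comment> \<open>parameters and initial point\<close>
    and params: "0 < \<mu>min" "\<mu>min \<le> \<mu>max" "0 < Lmin" "Lmin \<le> Lmax" "M > 0" "\<beta>C > 0" "\<beta>S > 0"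
                "\<alpha> > 0" "\<tau> > 1"
    and x0: "x 0 \<in> \<Gamma>"
    \<comment> \<open>Algorithm iMBA\<close>
    and subgr: "\<forall>k. \<xi> k \<in> limiting_subdiff g0 (x k) \<and> V k \<in> jac_subdiff g (x k)"
    and init: "\<forall>k. \<mu> k 0 \<in> {\<mu>min..\<mu>max} \<and> (\<forall>i. L k 0 $ i \<in> {Lmin..Lmax})"
    and Q_prop: "\<forall>k j. j \<le> jk k \<longrightarrow> linear (Q k j) \<and>
                   (\<forall>u w. inner (Q k j u) w = inner u (Q k j w)) \<and>
                   (\<forall>u. \<mu> k j * (norm u)\<^sup>2 \<le> inner u (Q k j u) \<and>
                        inner u (Q k j u) \<le> (\<mu> k j + M) * (norm u)\<^sup>2)"
    and xbar_min: "\<forall>k j. j \<le> jk k \<longrightarrow> Gkj k j (xbar k j) \<in> nonpos_orth \<and>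
                   (\<forall>z. Gkj k j z \<in> nonpos_orth \<longrightarrow> Fkj k j (xbar k j) \<le> Fkj k j z)"
    and inexact: "\<forall>k j. j \<le> jk k \<longrightarrow>
                   Fkj k j (y k j) \<le> Fkj k j (x k) \<and>
                   v k j \<in> limiting_subdiff \<phi> (y k j) \<and>
                   (\<forall>i. lam k j $ i \<ge> 0) \<and>
                   max (- inner (lam k j) (Gkj k j (y k j))) 0 + posinf_norm (Gkj k j (y k j))
                      \<le> \<beta>C / 2 * (norm (y k j - x k))\<^sup>2 \<and>
                   norm (\<xi> k + Q k j (y k j - x k) + v k j + (\<Sum>i\<in>UNIV. lam k j $ i *\<^sub>R V k $ i)
                         + inner (L k j) (lam k j) *\<^sub>R (y k j - x k))
                      \<le> \<beta>S * norm (y k j - x k)"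
    and reject: "\<forall>k j. j < jk k \<longrightarrow>
                   \<not> (g (y k j) \<in> nonpos_orth \<and>
                       F (y k j) \<le> F (x k) - ereal (\<alpha> / 2 * (norm (y k j - x k))\<^sup>2)) \<and>
                   (g (y k j) \<notin> nonpos_orth \<longrightarrow> L k (Suc j) = \<tau> *\<^sub>R L k j \<and> \<mu> k (Suc j) = \<mu> k j) \<and>
                   (g (y k j) \<in> nonpos_orth \<longrightarrow> L k (Suc j) = L k j \<and> \<mu> k (Suc j) = \<tau> * \<mu> k j)"
    and accept: "\<forall>k. g (y k (jk k)) \<in> nonpos_orth \<and>
                   F (y k (jk k)) \<le> F (x k) - ereal (\<alpha> / 2 * (norm (y k (jk k) - x k))\<^sup>2)"
    and next_iter: "\<forall>k. x (Suc k) = y k (jk k)"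
    \<comment> \<open>Assumption 2\<close>
    and A2: "\<forall>k j. j \<le> jk k \<longrightarrow>
               metric_subregular (\<lambda>z. {Gkj k j z - w | w. w \<in> nonpos_orth}) (xbar k j) 0"
    \<comment> \<open>Assumption 3\<close>
    and A3: "bounded (range x)"
  shows "cluster_points x \<noteq> {} \<and> compact (cluster_points x) \<and>
         (\<lambda>k. norm (x k - xbar k (jk k))) \<longlonglongrightarrow> 0 \<and>
         (\<lambda>k. norm (x (Suc k) - xbar k (jk k))) \<longlonglongrightarrow> 0"
proof -
  define K where "K = max (\<beta>C / Lmin) (max (16 * \<beta>S\<^sup>2 / \<mu>min\<^sup>2) (2 * \<beta>C / \<mu>min))"
  define d where "d = (\<lambda>k. norm (x (Suc k) - x k))"
  have bnds: "j \<le> jk k \<Longrightarrow> \<mu>min \<le> \<mu> k j \<and> (\<forall>i. Lmin \<le> L k j $ i)" for k j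
  proof (induction j)
    case 0 then show ?case using init[rule_format, of k] by simp
  next
    case (Suc j)
    then have j: "j < jk k" by simp
    then have IH: "\<mu>min \<le> \<mu> k j \<and> (\<forall>i. Lmin \<le> L k j $ i)" using Suc.IH by simp
    have mpos: "0 < \<mu> k j" using IH params by linarith
    show ?case
    proof (cases "g (y k j) \<in> nonpos_orth")
      case True
      then have "L k (Suc j) = L k j \<and> \<mu> k (Suc j) = \<tau> * \<mu> k j"
        using reject[rule_format, OF j] by simp
      moreover have "\<mu> k j \<le> \<tau> * \<mu> k j" using mpos params by simp
      ultimately show ?thesis using IH by auto
    next
      case False
      then have e: "L k (Suc j) = \<tau> *\<^sub>R L k j \<and> \<mu> k (Suc j) = \<mu> k j"
        using reject[rule_format, OF j] by simp
      have "Lmin \<le> \<tau> * L k j $ i" for i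
      proof -
        have "Lmin \<le> L k j $ i" using IH by blast
        moreover have "1 * L k j $ i \<le> \<tau> * L k j $ i"
          using params \<open>Lmin \<le> L k j $ i\<close> by (intro mult_right_mono) auto
        ultimately show ?thesis by linarith
      qed
      then show ?thesis using e IH by auto
    qed
  qed
  have bound: "(norm (x (Suc k) - xbar k (jk k)))\<^sup>2 \<le> K * (d k)\<^sup>2" for k
  proof -
    let ?j = "jk k"
    have Q: "linear (Q k ?j)" "\<forall>u w. inner (Q k ?j u) w = inner u (Q k ?j w)"
      "\<forall>u. \<mu> k ?j * (norm u)\<^sup>2 \<le> inner u (Q k ?j u)" using Q_prop[THEN spec[where x=k], THEN spec[where x="jk k"], THEN mp, OF order_refl] by simp_all
    have xb: "Gkj k ?j (xbar k ?j) \<in> nonpos_orth" "\<forall>z. Gkj k ?j z \<in> nonpos_orth \<longrightarrow> Fkj k ?j (xbar k ?j) \<le> Fkj k ?j z"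
      using xbar_min[THEN spec[where x=k], THEN spec[where x="jk k"], THEN mp, OF order_refl] by simp_all
    have ie: "v k ?j \<in> limiting_subdiff \<phi> (y k ?j)" "\<forall>i. lam k ?j $ i \<ge> 0"
       "max (- inner (lam k ?j) (Gkj k ?j (y k ?j))) 0 + posinf_norm (Gkj k ?j (y k ?j))
                      \<le> \<beta>C / 2 * (norm (y k ?j - x k))\<^sup>2"
       "norm (\<xi> k + Q k ?j (y k ?j - x k) + v k ?j + (\<Sum>i\<in>UNIV. lam k ?j $ i *\<^sub>R V k $ i)
                         + inner (L k ?j) (lam k ?j) *\<^sub>R (y k ?j - x k))
                      \<le> \<beta>S * norm (y k ?j - x k)"
      using inexact[THEN spec[where x=k], THEN spec[where x="jk k"], THEN mp, OF order_refl] by simp_all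
    have sub: "\<forall>z. \<phi> z \<ge> \<phi> (y k ?j) + inner (v k ?j) (z - y k ?j)"
      using limiting_convex_subgrad[OF phi_convex ie(1)] by blast
    have bb: "\<mu>min \<le> \<mu> k ?j" "\<forall>i. Lmin \<le> L k ?j $ i" using bnds[of ?j k] by auto
    have Fk_eq: "\<And>z. Fkj k ?j z = g0 (x k) + inner (\<xi> k) (z - x k) + inner (z - x k) (Q k ?j (z - x k)) / 2 + \<phi> z"
      by (simp add: Fkj_def)
    have G_eq: "Gkj k ?j = Gmap g (x k) (V k) (L k ?j)" by (simp add: Gkj_def)
    have "(norm (y k ?j - xbar k ?j))\<^sup>2 \<le> K * (norm (y k ?j - x k))\<^sup>2"
      unfolding K_def
      by (rule key_bound[OF Fk_eq G_eq phi_convex Q(1) Q(2) Q(3) bb(1) params(1) bb(2) params(3)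
            params(6) params(7) xb(1) xb(2) sub ie(2) ie(3) ie(4)])
    then show ?thesis using next_iter by (simp add: d_def)
  qed
  have feas: "x k \<in> \<Gamma>" for k
  proof (cases k)
    case 0 then show ?thesis using x0 by simp
  next
    case (Suc n)
    have "g (y n (jk n)) \<in> nonpos_orth" using accept[rule_format, of n] by (rule conjunct1)
    then show ?thesis unfolding Suc \<Gamma>_def using next_iter by simp
  qed
  define f where "f = (\<lambda>k. g0 (x k) + \<phi> (x k))"
  have Fx: "F (x k) = ereal (f k)" for k using feas[of k] by (simp add: F_def iMBA_F_def f_def \<Gamma>_def)
  have dec: "f (Suc k) \<le> f k - \<alpha> / 2 * (d k)\<^sup>2" for k
  proof -
    have "F (y k (jk k)) \<le> F (x k) - ereal (\<alpha> / 2 * (norm (y k (jk k) - x k))\<^sup>2)"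
      using accept[rule_format, of k] by (rule conjunct2)
    then have "F (x (Suc k)) \<le> F (x k) - ereal (\<alpha> / 2 * (d k)\<^sup>2)"
      using next_iter by (simp add: d_def)
    then show ?thesis unfolding Fx by simp
  qed
  obtain c where c0: "\<forall>z\<in>\<Gamma>. F z \<ge> ereal c" using F_bdd by blast
  have c: "c \<le> f k" for k using c0 feas[of k] Fx[of k] by auto
  have psum: "(\<Sum>k<n. \<alpha> / 2 * (d k)\<^sup>2) \<le> f 0 - f n" for n
  proof (induction n)
    case 0 then show ?case by simp
  next
    case (Suc n) then show ?case using dec[of n] by simp
  qed
  have "summable (\<lambda>k. \<alpha> / 2 * (d k)\<^sup>2)"
  proof (rule summableI_nonneg_bounded)
    show "0 \<le> \<alpha> / 2 * (d k)\<^sup>2" for k using params by simp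
    show "(\<Sum>k<n. \<alpha> / 2 * (d k)\<^sup>2) \<le> f 0 - c" for n using psum[of n] c[of n] by linarith
  qed
  then have "(\<lambda>k. \<alpha> / 2 * (d k)\<^sup>2) \<longlonglongrightarrow> 0" by (rule summable_LIMSEQ_zero)
  then have "(\<lambda>k. (2 / \<alpha>) * (\<alpha> / 2 * (d k)\<^sup>2)) \<longlonglongrightarrow> (2 / \<alpha>) * 0" by (intro tendsto_intros)
  then have d2: "(\<lambda>k. (d k)\<^sup>2) \<longlonglongrightarrow> 0" using params by simp
  have d0: "d \<longlonglongrightarrow> 0"
  proof -
    have "(\<lambda>k. sqrt ((d k)\<^sup>2)) \<longlonglongrightarrow> sqrt 0" by (intro tendsto_intros d2)
    then show ?thesis by (simp add: d_def)
  qed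
  have Kd: "(\<lambda>k. K * (d k)\<^sup>2) \<longlonglongrightarrow> 0" using tendsto_mult_right_zero[OF d2] by simp
  have s2: "(\<lambda>k. (norm (x (Suc k) - xbar k (jk k)))\<^sup>2) \<longlonglongrightarrow> 0"
  proof -
    have ev1: "\<forall>\<^sub>F k in sequentially. (0::real) \<le> (norm (x (Suc k) - xbar k (jk k)))\<^sup>2" by simp
    have ev2: "\<forall>\<^sub>F k in sequentially. (norm (x (Suc k) - xbar k (jk k)))\<^sup>2 \<le> K * (d k)\<^sup>2"
      using bound by simp
    show ?thesis by (rule tendsto_sandwich[OF ev1 ev2 tendsto_const Kd])
  qed
  have lim2: "(\<lambda>k. norm (x (Suc k) - xbar k (jk k))) \<longlonglongrightarrow> 0"
  proof -
    have "(\<lambda>k. sqrt ((norm (x (Suc k) - xbar k (jk k)))\<^sup>2)) \<longlonglongrightarrow> sqrt 0" by (intro tendsto_intros s2)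
    then show ?thesis by simp
  qed
  have lim1: "(\<lambda>k. norm (x k - xbar k (jk k))) \<longlonglongrightarrow> 0"
  proof (rule tendsto_sandwich[where f = "\<lambda>_. 0" and h = "\<lambda>k. d k + norm (x (Suc k) - xbar k (jk k))"])
    show "\<forall>\<^sub>F k in sequentially. 0 \<le> norm (x k - xbar k (jk k))" by simp
    show "\<forall>\<^sub>F k in sequentially. norm (x k - xbar k (jk k)) \<le> d k + norm (x (Suc k) - xbar k (jk k))"
    proof (intro always_eventually allI)
      fix k
      have "norm (x k - xbar k (jk k)) \<le> norm (x k - x (Suc k)) + norm (x (Suc k) - xbar k (jk k))"
        using norm_triangle_ineq[of "x k - x (Suc k)" "x (Suc k) - xbar k (jk k)"] by simp
      then show "norm (x k - xbar k (jk k)) \<le> d k + norm (x (Suc k) - xbar k (jk k))"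
        by (simp add: d_def norm_minus_commute)
    qed
    show "(\<lambda>_. 0) \<longlonglongrightarrow> (0::real)" by simp
    show "(\<lambda>k. d k + norm (x (Suc k) - xbar k (jk k))) \<longlonglongrightarrow> 0"
      using tendsto_add[OF d0 lim2] by simp
  qed
  show ?thesis using cluster_points_props[OF A3] lim1 lim2 by blast
qed

end
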